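(* Let $\mathcal{V}$ be a (left) skew-monoidal category, let $(\mathcal{A},\underline{\mathcal{A}}(-,-),M,j)$ be a skew $\mathcal{V}$-category, and let $(Q,S,\psi)$ be a locally weak $\mathcal{V}$-comonad on it. Then the following data define a skew-enrichment of the category $\mathcal{A}$ over the skew-monoidal category $\mathcal{V}_Q$ (the skew-monoidal structure on $\mathcal{V}$ induced by $Q$): (i) hom functor $(A,B)\mapsto\underline{\mathcal{A}}(SA,B)$; (ii) composition given by the composite $$\underline{\mathcal{A}}(SB,C)\otimes Q\underline{\mathcal{A}}(SA,B)\xrightarrow{1\otimes\psi}\underline{\mathcal{A}}(SB,C)\otimes\underline{\mathcal{A}}(S^2A,SB)\xrightarrow{M}\underline{\mathcal{A}}(S^2A,C)\xrightarrow{\underline{\mathcal{A}}(\delta_A,1)}\underline{\mathcal{A}}(SA,C);$$ (iii) unit given by the composite $I\xrightarrow{j}\underline{\mathcal{A}}(A,A)\xrightarrow{\underline{\mathcal{A}}(\varepsilon_A,1)}\underline{\mathcal{A}}(SA,A)$.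
   Context: A (left) skew-monoidal category $(\mathcal{V},\otimes,I,a,l,r)$ is a category with a functor $\otimes$, an object $I$, and natural transformations (not necessarily invertible) $a\colon (X\otimes Y)\otimes Z\to X\otimes(Y\otimes Z)$, $l\colon I\otimes X\to X$, $r\colon X\to X\otimes I$, satisfying: $(1\otimes a)\circ a\circ(a\otimes 1)=a\circ a$; $l_{X\otimes Y}\circ a_{I,X,Y}=l_X\otimes 1_Y$; $(1_X\otimes l_Y)\circ a_{X,I,Y}\circ(r_X\otimes 1_Y)=1$; $a_{X,Y,I}\circ r_{X\otimes Y}=1_X\otimes r_Y$; $l_I\circ r_I=1_I$. A skew $\mathcal{V}$-category (equivalently, a skew-enrichment of the category $\mathcal{A}$ over $\mathcal{V}$) consists of a category $\mathcal{A}$, a functor $\underline{\mathcal{A}}(-,-)\colon\mathcal{A}^{\mathrm{op}}\times\mathcal{A}\to\mathcal{V}$, and natural transformations $M\colon\underline{\mathcal{A}}(B,C)\otimes\underline{\mathcal{A}}(A,B)\to\underline{\mathcal{A}}(A,C)$, $j\colon I\to\underline{\mathcal{A}}(A,A)$ (natural with respect to morphisms of $\mathcal{A}$) with $M\circ(1\otimes M)\circ a=M\circ(M\otimes 1)$, $M\circ(j\otimes 1)=l$, $M\circ(1\otimes j)\circ r=1$. A monoidal comonad $(Q,\varphi,\varphi_0,\delta,\varepsilon)$ on $\mathcal{V}$ is a comonad $(Q,\delta\colon Q\to Q^2,\varepsilon\colon Q\to 1)$ whose functor is monoidal via natural maps $\varphi\colon QX\otimes QY\to Q(X\otimes Y)$,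 $\varphi_0\colon I\to QI$, and whose $\delta,\varepsilon$ are monoidal natural transformations. The induced skew-monoidal structure $\mathcal{V}_Q$ on $\mathcal{V}$ has tensor $X\otimes QY$, unit $I$, associativity $(X\otimes QY)\otimes QZ\xrightarrow{a}X\otimes(QY\otimes QZ)\xrightarrow{1\otimes(1\otimes\delta)}X\otimes(QY\otimes Q^2Z)\xrightarrow{1\otimes\varphi}X\otimes Q(Y\otimes QZ)$, left unit $I\otimes QX\xrightarrow{l}QX\xrightarrow{\varepsilon}X$, and right unit $X\xrightarrow{r}X\otimes I\xrightarrow{1\otimes\varphi_0}X\otimes QI$. A locally weak $\mathcal{V}$-comonad $(Q,S,\psi)$ on a skew $\mathcal{V}$-category $\underline{\mathcal{A}}$ consists of a monoidal comonad $(Q,\varphi,\varphi_0,\delta,\varepsilon)$ on $\mathcal{V}$, a comonad $(S,\delta,\varepsilon)$ on the category $\mathcal{A}$, and a natural transformation $\psi\colon Q\underline{\mathcal{A}}(A,B)\to\underline{\mathcal{A}}(SA,SB)$, such that: (1) $\psi\circ QM\circ\varphi=M\circ(\psi\otimes\psi)\colon Q\underline{\mathcal{A}}(B,C)\otimes Q\underline{\mathcal{A}}(A,B)\to\underline{\mathcal{A}}(SA,SC)$; (2) $\underline{\mathcal{A}}(\delta_A,1)\circ\psi\circ Q\psi\circ\delta=\underline{\mathcal{A}}(1,\delta_B)\circ\psi\colon Q\underline{\mathcal{A}}(A,B)\to\underline{\mathcal{A}}(SA,S^2B)$; (3) $\psi\circ Qj\circ\varphi_0=j\colon I\to\underline{\mathcal{A}}(SA,SA)$;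 (4) $\underline{\mathcal{A}}(1,\varepsilon_B)\circ\psi=\underline{\mathcal{A}}(\varepsilon_A,1)\circ\varepsilon\colon Q\underline{\mathcal{A}}(A,B)\to\underline{\mathcal{A}}(SA,B)$. *)

theory Defs
  imports Main
begin

record ('o,'m) cat =
  Obj :: "'o set"
  Arr :: "'m set"
  Dom :: "'m \<Rightarrow> 'o"
  Cod :: "'m \<Rightarrow> 'o"
  Idt :: "'o \<Rightarrow> 'm"
  Cmp :: "'m \<Rightarrow> 'm \<Rightarrow> 'm"   (* Cmp C g f = g \<circ> f *)

definition hom_in :: "('o,'m) cat \<Rightarrow> 'm \<Rightarrow> 'o \<Rightarrow> 'o \<Rightarrow> bool" where
  "hom_in C f X Y \<longleftrightarrow> f \<in> Arr C \<and> Dom C f = X \<and> Cod C f = Y"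

definition category :: "('o,'m) cat \<Rightarrow> bool" where
  "category C \<longleftrightarrow>
     (\<forall>f\<in>Arr C. Dom C f \<in> Obj C \<and> Cod C f \<in> Obj C) \<and>
     (\<forall>X\<in>Obj C. hom_in C (Idt C X) X X) \<and>
     (\<forall>f\<in>Arr C. \<forall>g\<in>Arr C. Cod C f = Dom C g \<longrightarrow> hom_in C (Cmp C g f) (Dom C f) (Cod C g)) \<and>
     (\<forall>f\<in>Arr C. Cmp C (Idt C (Cod C f)) f = f \<and> Cmp C f (Idt C (Dom C f)) = f) \<and>
     (\<forall>f\<in>Arr C. \<forall>g\<in>Arr C. \<forall>h\<in>Arr C. Cod C f = Dom C g \<longrightarrow> Cod C g = Dom C h \<longrightarrow>
        Cmp C h (Cmp C g f) = Cmp C (Cmp C h g) f)"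

definition opcat :: "('o,'m) cat \<Rightarrow> ('o,'m) cat" where
  "opcat C = \<lparr>Obj = Obj C, Arr = Arr C, Dom = Cod C, Cod = Dom C, Idt = Idt C,
              Cmp = (\<lambda>g f. Cmp C f g)\<rparr>"

definition prodcat :: "('o1,'m1) cat \<Rightarrow> ('o2,'m2) cat \<Rightarrow> ('o1 \<times> 'o2, 'm1 \<times> 'm2) cat" where
  "prodcat C D = \<lparr>Obj = Obj C \<times> Obj D, Arr = Arr C \<times> Arr D,
     Dom = (\<lambda>(f,g). (Dom C f, Dom D g)), Cod = (\<lambda>(f,g). (Cod C f, Cod D g)),
     Idt = (\<lambda>(X,Y). (Idt C X, Idt D Y)),
     Cmp = (\<lambda>(g,g') (f,f'). (Cmp C g f, Cmp D g' f'))\<rparr>"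

definition "functor" :: "('o1,'m1) cat \<Rightarrow> ('o2,'m2) cat \<Rightarrow> ('o1 \<Rightarrow> 'o2) \<Rightarrow> ('m1 \<Rightarrow> 'm2) \<Rightarrow> bool" where
  "functor C D Fo Fm \<longleftrightarrow>
     (\<forall>X\<in>Obj C. Fo X \<in> Obj D) \<and>
     (\<forall>f\<in>Arr C. hom_in D (Fm f) (Fo (Dom C f)) (Fo (Cod C f))) \<and>
     (\<forall>X\<in>Obj C. Fm (Idt C X) = Idt D (Fo X)) \<and>
     (\<forall>f\<in>Arr C. \<forall>g\<in>Arr C. Cod C f = Dom C g \<longrightarrow> Fm (Cmp C g f) = Cmp D (Fm g) (Fm f))"

definition nat_trans :: "('o1,'m1) cat \<Rightarrow> ('o2,'m2) cat \<Rightarrow> ('o1 \<Rightarrow> 'o2) \<Rightarrow> ('m1 \<Rightarrow> 'm2)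
    \<Rightarrow> ('o1 \<Rightarrow> 'o2) \<Rightarrow> ('m1 \<Rightarrow> 'm2) \<Rightarrow> ('o1 \<Rightarrow> 'm2) \<Rightarrow> bool" where
  "nat_trans C D Fo Fm Go Gm \<eta> \<longleftrightarrow>
     (\<forall>X\<in>Obj C. hom_in D (\<eta> X) (Fo X) (Go X)) \<and>
     (\<forall>f\<in>Arr C. Cmp D (\<eta> (Cod C f)) (Fm f) = Cmp D (Gm f) (\<eta> (Dom C f)))"

record ('v,'f) skew =
  ten  :: "'v \<Rightarrow> 'v \<Rightarrow> 'v"
  tenm :: "'f \<Rightarrow> 'f \<Rightarrow> 'f"
  unt  :: "'v"
  asc  :: "'v \<Rightarrow> 'v \<Rightarrow> 'v \<Rightarrow> 'f"   (* (X\<otimes>Y)\<otimes>Z \<rightarrow> X\<otimes>(Y\<otimes>Z) *)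
  lu   :: "'v \<Rightarrow> 'f"               (* I\<otimes>X \<rightarrow> X *)
  ru   :: "'v \<Rightarrow> 'f"               (* X \<rightarrow> X\<otimes>I *)

definition skew_monoidal :: "('v,'f) cat \<Rightarrow> ('v,'f) skew \<Rightarrow> bool" where
  "skew_monoidal V T \<longleftrightarrow>
     category V \<and>
     functor (prodcat V V) V (case_prod (ten T)) (case_prod (tenm T)) \<and>
     unt T \<in> Obj V \<and>
     (\<forall>X\<in>Obj V. \<forall>Y\<in>Obj V. \<forall>Z\<in>Obj V.
        hom_in V (asc T X Y Z) (ten T (ten T X Y) Z) (ten T X (ten T Y Z))) \<and>
     (\<forall>f\<in>Arr V. \<forall>g\<in>Arr V. \<forall>h\<in>Arr V.
        Cmp V (asc T (Cod V f) (Cod V g) (Cod V h)) (tenm T (tenm T f g) h)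
        = Cmp V (tenm T f (tenm T g h)) (asc T (Dom V f) (Dom V g) (Dom V h))) \<and>
     (\<forall>X\<in>Obj V. hom_in V (lu T X) (ten T (unt T) X) X) \<and>
     (\<forall>f\<in>Arr V. Cmp V (lu T (Cod V f)) (tenm T (Idt V (unt T)) f) = Cmp V f (lu T (Dom V f))) \<and>
     (\<forall>X\<in>Obj V. hom_in V (ru T X) X (ten T X (unt T))) \<and>
     (\<forall>f\<in>Arr V. Cmp V (ru T (Cod V f)) f = Cmp V (tenm T f (Idt V (unt T))) (ru T (Dom V f))) \<and>
     (\<forall>W\<in>Obj V. \<forall>X\<in>Obj V. \<forall>Y\<in>Obj V. \<forall>Z\<in>Obj V.
        Cmp V (tenm T (Idt V W) (asc T X Y Z))
          (Cmp V (asc T W (ten T X Y) Z) (tenm T (asc T W X Y) (Idt V Z)))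
        = Cmp V (asc T W X (ten T Y Z)) (asc T (ten T W X) Y Z)) \<and>
     (\<forall>X\<in>Obj V. \<forall>Y\<in>Obj V.
        Cmp V (lu T (ten T X Y)) (asc T (unt T) X Y) = tenm T (lu T X) (Idt V Y)) \<and>
     (\<forall>X\<in>Obj V. \<forall>Y\<in>Obj V.
        Cmp V (tenm T (Idt V X) (lu T Y)) (Cmp V (asc T X (unt T) Y) (tenm T (ru T X) (Idt V Y)))
        = Idt V (ten T X Y)) \<and>
     (\<forall>X\<in>Obj V. \<forall>Y\<in>Obj V.
        Cmp V (asc T X Y (unt T)) (ru T (ten T X Y)) = tenm T (Idt V X) (ru T Y)) \<and>
     Cmp V (lu T (unt T)) (ru T (unt T)) = Idt V (unt T)"

text \<open>Naturality of M and j with respect to morphisms of A is the usual one: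
  M natural in X and Z, extranatural in Y; j extranatural.\<close>

definition skew_enriched :: "('v,'f) cat \<Rightarrow> ('v,'f) skew \<Rightarrow> ('a,'g) cat
    \<Rightarrow> ('a \<Rightarrow> 'a \<Rightarrow> 'v) \<Rightarrow> ('g \<Rightarrow> 'g \<Rightarrow> 'f)
    \<Rightarrow> ('a \<Rightarrow> 'a \<Rightarrow> 'a \<Rightarrow> 'f) \<Rightarrow> ('a \<Rightarrow> 'f) \<Rightarrow> bool" where
  "skew_enriched V T A hom homm M j \<longleftrightarrow>
     category A \<and>
     functor (prodcat (opcat A) A) V (case_prod hom) (case_prod homm) \<and>
     (\<forall>X\<in>Obj A. \<forall>Y\<in>Obj A. \<forall>Z\<in>Obj A.
        hom_in V (M X Y Z) (ten T (hom Y Z) (hom X Y)) (hom X Z)) \<and>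
     (\<forall>X\<in>Obj A. hom_in V (j X) (unt T) (hom X X)) \<and>
     (\<forall>f\<in>Arr A. \<forall>Y\<in>Obj A. \<forall>Z\<in>Obj A.
        Cmp V (homm f (Idt A Z)) (M (Cod A f) Y Z)
        = Cmp V (M (Dom A f) Y Z) (tenm T (Idt V (hom Y Z)) (homm f (Idt A Y)))) \<and>
     (\<forall>g\<in>Arr A. \<forall>X\<in>Obj A. \<forall>Y\<in>Obj A.
        Cmp V (homm (Idt A X) g) (M X Y (Dom A g))
        = Cmp V (M X Y (Cod A g)) (tenm T (homm (Idt A Y) g) (Idt V (hom X Y)))) \<and>
     (\<forall>h\<in>Arr A. \<forall>X\<in>Obj A. \<forall>Z\<in>Obj A.
        Cmp V (M X (Cod A h) Z) (tenm T (Idt V (hom (Cod A h) Z)) (homm (Idt A X) h))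
        = Cmp V (M X (Dom A h) Z) (tenm T (homm h (Idt A Z)) (Idt V (hom X (Dom A h))))) \<and>
     (\<forall>f\<in>Arr A. Cmp V (homm (Idt A (Dom A f)) f) (j (Dom A f))
                = Cmp V (homm f (Idt A (Cod A f))) (j (Cod A f))) \<and>
     (\<forall>W\<in>Obj A. \<forall>X\<in>Obj A. \<forall>Y\<in>Obj A. \<forall>Z\<in>Obj A.
        Cmp V (M W Y Z) (Cmp V (tenm T (Idt V (hom Y Z)) (M W X Y)) (asc T (hom Y Z) (hom X Y) (hom W X)))
        = Cmp V (M W X Z) (tenm T (M X Y Z) (Idt V (hom W X)))) \<and>
     (\<forall>X\<in>Obj A. \<forall>Y\<in>Obj A.
        Cmp V (M X Y Y) (tenm T (j Y) (Idt V (hom X Y))) = lu T (hom X Y)) \<and>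
     (\<forall>X\<in>Obj A. \<forall>Y\<in>Obj A.
        Cmp V (M X X Y) (Cmp V (tenm T (Idt V (hom X Y)) (j X)) (ru T (hom X Y))) = Idt V (hom X Y))"

definition comonad :: "('o,'m) cat \<Rightarrow> ('o \<Rightarrow> 'o) \<Rightarrow> ('m \<Rightarrow> 'm) \<Rightarrow> ('o \<Rightarrow> 'm) \<Rightarrow> ('o \<Rightarrow> 'm) \<Rightarrow> bool" where
  "comonad C So Sm dl ep \<longleftrightarrow>
     functor C C So Sm \<and>
     nat_trans C C So Sm (So \<circ> So) (Sm \<circ> Sm) dl \<and>
     nat_trans C C So Sm id id ep \<and>
     (\<forall>X\<in>Obj C. Cmp C (Sm (dl X)) (dl X) = Cmp C (dl (So X)) (dl X)) \<and>
     (\<forall>X\<in>Obj C. Cmp C (ep (So X)) (dl X) = Idt C (So X)) \<and>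
     (\<forall>X\<in>Obj C. Cmp C (Sm (ep X)) (dl X) = Idt C (So X))"

definition monoidal_comonad :: "('v,'f) cat \<Rightarrow> ('v,'f) skew \<Rightarrow> ('v \<Rightarrow> 'v) \<Rightarrow> ('f \<Rightarrow> 'f)
    \<Rightarrow> ('v \<Rightarrow> 'v \<Rightarrow> 'f) \<Rightarrow> 'f \<Rightarrow> ('v \<Rightarrow> 'f) \<Rightarrow> ('v \<Rightarrow> 'f) \<Rightarrow> bool" where
  "monoidal_comonad V T Qo Qm phi phi0 dl ep \<longleftrightarrow>
     comonad V Qo Qm dl ep \<and>
     (\<forall>X\<in>Obj V. \<forall>Y\<in>Obj V. hom_in V (phi X Y) (ten T (Qo X) (Qo Y)) (Qo (ten T X Y))) \<and>
     (\<forall>f\<in>Arr V. \<forall>g\<in>Arr V.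
        Cmp V (phi (Cod V f) (Cod V g)) (tenm T (Qm f) (Qm g))
        = Cmp V (Qm (tenm T f g)) (phi (Dom V f) (Dom V g))) \<and>
     hom_in V phi0 (unt T) (Qo (unt T)) \<and>
     (\<forall>X\<in>Obj V. \<forall>Y\<in>Obj V. \<forall>Z\<in>Obj V.
        Cmp V (Qm (asc T X Y Z)) (Cmp V (phi (ten T X Y) Z) (tenm T (phi X Y) (Idt V (Qo Z))))
        = Cmp V (phi X (ten T Y Z)) (Cmp V (tenm T (Idt V (Qo X)) (phi Y Z)) (asc T (Qo X) (Qo Y) (Qo Z)))) \<and>
     (\<forall>X\<in>Obj V.
        Cmp V (Qm (lu T X)) (Cmp V (phi (unt T) X) (tenm T phi0 (Idt V (Qo X)))) = lu T (Qo X)) \<and>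
     (\<forall>X\<in>Obj V.
        Cmp V (phi X (unt T)) (Cmp V (tenm T (Idt V (Qo X)) phi0) (ru T (Qo X))) = Qm (ru T X)) \<and>
     (\<forall>X\<in>Obj V. \<forall>Y\<in>Obj V.
        Cmp V (dl (ten T X Y)) (phi X Y)
        = Cmp V (Qm (phi X Y)) (Cmp V (phi (Qo X) (Qo Y)) (tenm T (dl X) (dl Y)))) \<and>
     Cmp V (dl (unt T)) phi0 = Cmp V (Qm phi0) phi0 \<and>
     (\<forall>X\<in>Obj V. \<forall>Y\<in>Obj V.
        Cmp V (ep (ten T X Y)) (phi X Y) = tenm T (ep X) (ep Y)) \<and>
     Cmp V (ep (unt T)) phi0 = Idt V (unt T)"

definition VQ :: "('v,'f) cat \<Rightarrow> ('v,'f) skew \<Rightarrow> ('v \<Rightarrow> 'v) \<Rightarrow> ('f \<Rightarrow> 'f)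
    \<Rightarrow> ('v \<Rightarrow> 'v \<Rightarrow> 'f) \<Rightarrow> 'f \<Rightarrow> ('v \<Rightarrow> 'f) \<Rightarrow> ('v \<Rightarrow> 'f) \<Rightarrow> ('v,'f) skew" where
  "VQ V T Qo Qm phi phi0 dl ep =
    \<lparr>ten = (\<lambda>X Y. ten T X (Qo Y)),
     tenm = (\<lambda>f g. tenm T f (Qm g)),
     unt = unt T,
     asc = (\<lambda>X Y Z. Cmp V (tenm T (Idt V X) (phi Y (Qo Z)))
                     (Cmp V (tenm T (Idt V X) (tenm T (Idt V (Qo Y)) (dl Z))) (asc T X (Qo Y) (Qo Z)))),
     lu = (\<lambda>X. Cmp V (ep X) (lu T (Qo X))),
     ru = (\<lambda>X. Cmp V (tenm T (Idt V X) phi0) (ru T X))\<rparr>"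

definition locally_weak_comonad :: "('v,'f) cat \<Rightarrow> ('v,'f) skew \<Rightarrow> ('a,'g) cat
    \<Rightarrow> ('a \<Rightarrow> 'a \<Rightarrow> 'v) \<Rightarrow> ('g \<Rightarrow> 'g \<Rightarrow> 'f) \<Rightarrow> ('a \<Rightarrow> 'a \<Rightarrow> 'a \<Rightarrow> 'f) \<Rightarrow> ('a \<Rightarrow> 'f)
    \<Rightarrow> ('v \<Rightarrow> 'v) \<Rightarrow> ('f \<Rightarrow> 'f) \<Rightarrow> ('v \<Rightarrow> 'v \<Rightarrow> 'f) \<Rightarrow> 'f \<Rightarrow> ('v \<Rightarrow> 'f) \<Rightarrow> ('v \<Rightarrow> 'f)
    \<Rightarrow> ('a \<Rightarrow> 'a) \<Rightarrow> ('g \<Rightarrow> 'g) \<Rightarrow> ('a \<Rightarrow> 'g) \<Rightarrow> ('a \<Rightarrow> 'g)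
    \<Rightarrow> ('a \<Rightarrow> 'a \<Rightarrow> 'f) \<Rightarrow> bool" where
  "locally_weak_comonad V T A hom homm M j Qo Qm phi phi0 dQ eQ So Sm dS eS psi \<longleftrightarrow>
     monoidal_comonad V T Qo Qm phi phi0 dQ eQ \<and>
     comonad A So Sm dS eS \<and>
     (\<forall>X\<in>Obj A. \<forall>Y\<in>Obj A. hom_in V (psi X Y) (Qo (hom X Y)) (hom (So X) (So Y))) \<and>
     (\<forall>f\<in>Arr A. \<forall>g\<in>Arr A.
        Cmp V (psi (Dom A f) (Cod A g)) (Qm (homm f g))
        = Cmp V (homm (Sm f) (Sm g)) (psi (Cod A f) (Dom A g))) \<and>
     (\<forall>X\<in>Obj A. \<forall>Y\<in>Obj A. \<forall>Z\<in>Obj A.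
        Cmp V (psi X Z) (Cmp V (Qm (M X Y Z)) (phi (hom Y Z) (hom X Y)))
        = Cmp V (M (So X) (So Y) (So Z)) (tenm T (psi Y Z) (psi X Y))) \<and>
     (\<forall>X\<in>Obj A. \<forall>Y\<in>Obj A.
        Cmp V (homm (dS X) (Idt A (So (So Y))))
          (Cmp V (psi (So X) (So Y)) (Cmp V (Qm (psi X Y)) (dQ (hom X Y))))
        = Cmp V (homm (Idt A (So X)) (dS Y)) (psi X Y)) \<and>
     (\<forall>X\<in>Obj A. Cmp V (psi X X) (Cmp V (Qm (j X)) phi0) = j (So X)) \<and>
     (\<forall>X\<in>Obj A. \<forall>Y\<in>Obj A.
        Cmp V (homm (Idt A (So X)) (eS Y)) (psi X Y)
        = Cmp V (homm (eS X) (Idt A Y)) (eQ (hom X Y)))"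

end

theory Submission
  imports Defs
begin


context
  fixes C :: "('o,'m) cat"
  assumes cat: "category C"
begin
lemma cat_dom_obj[simp]: "f \<in> Arr C \<Longrightarrow> Dom C f \<in> Obj C"
  using cat unfolding category_def by blast
lemma cat_cod_obj[simp]: "f \<in> Arr C \<Longrightarrow> Cod C f \<in> Obj C"
  using cat unfolding category_def by blast
lemma cat_idt[simp]: "X \<in> Obj C \<Longrightarrow> Idt C X \<in> Arr C"
  "X \<in> Obj C \<Longrightarrow> Dom C (Idt C X) = X" "X \<in> Obj C \<Longrightarrow> Cod C (Idt C X) = X"
  using cat unfolding category_def hom_in_def by blast+
lemma cat_cmp[simp]: assumes "f \<in> Arr C" "g \<in> Arr C" "Cod C f = Dom C g"
  shows "Cmp C g f \<in> Arr C" "Dom C (Cmp C g f) = Dom C f" "Cod C (Cmp C g f) = Cod C g"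
  using cat assms unfolding category_def hom_in_def by blast+
lemma cat_idl[simp]: "f \<in> Arr C \<Longrightarrow> Cod C f = Y \<Longrightarrow> Cmp C (Idt C Y) f = f"
  using cat unfolding category_def by blast
lemma cat_idr[simp]: "f \<in> Arr C \<Longrightarrow> Dom C f = X \<Longrightarrow> Cmp C f (Idt C X) = f"
  using cat unfolding category_def by blast
lemma cat_assoc[simp]: "f \<in> Arr C \<Longrightarrow> g \<in> Arr C \<Longrightarrow> h \<in> Arr C \<Longrightarrow> Cod C f = Dom C g \<Longrightarrow> Cod C g = Dom C h \<Longrightarrow>
   Cmp C (Cmp C h g) f = Cmp C h (Cmp C g f)"
  using cat unfolding category_def by metis
lemma cat_rest: "Cmp C a b = Cmp C c d \<Longrightarrow> a \<in> Arr C \<Longrightarrow> b \<in> Arr C \<Longrightarrow> c \<in> Arr C \<Longrightarrow> d \<in> Arr C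
  \<Longrightarrow> r \<in> Arr C \<Longrightarrow> Cod C b = Dom C a \<Longrightarrow> Cod C d = Dom C c \<Longrightarrow> Cod C r = Dom C b \<Longrightarrow> Cod C r = Dom C d
  \<Longrightarrow> Cmp C a (Cmp C b r) = Cmp C c (Cmp C d r)"
  by (metis cat_assoc)
end

context
  fixes C :: "('o,'m) cat" and D :: "('p,'n) cat" and Fo Fm
  assumes F: "functor C D Fo Fm"
begin
lemma fun_obj[simp]: "X \<in> Obj C \<Longrightarrow> Fo X \<in> Obj D" using F unfolding functor_def by blast
lemma fun_arr[simp]: "f \<in> Arr C \<Longrightarrow> Fm f \<in> Arr D" "f \<in> Arr C \<Longrightarrow> Dom D (Fm f) = Fo (Dom C f)"
  "f \<in> Arr C \<Longrightarrow> Cod D (Fm f) = Fo (Cod C f)"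
  using F unfolding functor_def hom_in_def by blast+
lemma fun_idt[simp]: "X \<in> Obj C \<Longrightarrow> Fm (Idt C X) = Idt D (Fo X)" using F unfolding functor_def by blast
lemma fun_cmp: "f \<in> Arr C \<Longrightarrow> g \<in> Arr C \<Longrightarrow> Cod C f = Dom C g \<Longrightarrow> Fm (Cmp C g f) = Cmp D (Fm g) (Fm f)"
  using F unfolding functor_def by blast
end




locale LW =
  fixes V :: "('v,'f) cat" and T :: "('v,'f) skew" and A :: "('a,'g) cat"
    and hom homm M j Qo Qm phi phi0 dQ eQ So Sm dS eS psi
  assumes SM: "skew_monoidal V T"
    and SE: "skew_enriched V T A hom homm M j"
    and LWC: "locally_weak_comonad V T A hom homm M j Qo Qm phi phi0 dQ eQ So Sm dS eS psi"
begin

abbreviation cmp (infixr "\<cdot>" 55) where "g \<cdot> f \<equiv> Cmp V g f"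
abbreviation tm (infixr "\<odot>" 60) where "f \<odot> g \<equiv> tenm T f g"
abbreviation iV where "iV X \<equiv> Idt V X"
abbreviation iA where "iA X \<equiv> Idt A X"

lemma catV: "category V" using SM unfolding skew_monoidal_def by blast
lemma catA: "category A" using SE unfolding skew_enriched_def by blast
lemma MC: "monoidal_comonad V T Qo Qm phi phi0 dQ eQ" using LWC unfolding locally_weak_comonad_def by blast
lemma SC: "comonad A So Sm dS eS" using LWC unfolding locally_weak_comonad_def by blast
lemma QC: "comonad V Qo Qm dQ eQ" using MC unfolding monoidal_comonad_def by blast
lemma Sfun: "functor A A So Sm" using SC unfolding comonad_def by blast
lemma Qfun: "functor V V Qo Qm" using QC unfolding comonad_def by blast
lemma tenfun: "functor (prodcat V V) V (case_prod (ten T)) (case_prod (tenm T))"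
  using SM unfolding skew_monoidal_def by blast
lemma homfun: "functor (prodcat (opcat A) A) V (case_prod hom) (case_prod homm)"
  using SE unfolding skew_enriched_def by blast

lemmas V_simps[simp] = cat_dom_obj[OF catV] cat_cod_obj[OF catV] cat_idt[OF catV] cat_cmp[OF catV]
  cat_idl[OF catV] cat_idr[OF catV] cat_assoc[OF catV]
lemmas A_simps[simp] = cat_dom_obj[OF catA] cat_cod_obj[OF catA] cat_idt[OF catA] cat_cmp[OF catA]
  cat_idl[OF catA] cat_idr[OF catA] cat_assoc[OF catA]
lemmas S_simps[simp] = fun_obj[OF Sfun] fun_arr[OF Sfun] fun_idt[OF Sfun]
lemmas Q_simps[simp] = fun_obj[OF Qfun] fun_arr[OF Qfun] fun_idt[OF Qfun]

lemma ten_obj[simp]: "X \<in> Obj V \<Longrightarrow> Y \<in> Obj V \<Longrightarrow> ten T X Y \<in> Obj V"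
  using fun_obj[OF tenfun, of "(X,Y)"] by (simp add: prodcat_def)
lemma tenm_arr[simp]: "f \<in> Arr V \<Longrightarrow> g \<in> Arr V \<Longrightarrow> f \<odot> g \<in> Arr V"
  "f \<in> Arr V \<Longrightarrow> g \<in> Arr V \<Longrightarrow> Dom V (f \<odot> g) = ten T (Dom V f) (Dom V g)"
  "f \<in> Arr V \<Longrightarrow> g \<in> Arr V \<Longrightarrow> Cod V (f \<odot> g) = ten T (Cod V f) (Cod V g)"
  using fun_arr[OF tenfun, of "(f,g)"] by (simp_all add: prodcat_def)
lemma tenm_idt[simp]: "X \<in> Obj V \<Longrightarrow> Y \<in> Obj V \<Longrightarrow> iV X \<odot> iV Y = iV (ten T X Y)"
  using fun_idt[OF tenfun, of "(X,Y)"] by (simp add: prodcat_def)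
lemma tenm_cmp: "f \<in> Arr V \<Longrightarrow> g \<in> Arr V \<Longrightarrow> f' \<in> Arr V \<Longrightarrow> g' \<in> Arr V \<Longrightarrow> Cod V f = Dom V g \<Longrightarrow> Cod V f' = Dom V g'
  \<Longrightarrow> (g \<cdot> f) \<odot> (g' \<cdot> f') = (g \<odot> g') \<cdot> (f \<odot> f')"
  using fun_cmp[OF tenfun, of "(f,f')" "(g,g')"] by (simp add: prodcat_def)

lemma hom_obj[simp]: "X \<in> Obj A \<Longrightarrow> Y \<in> Obj A \<Longrightarrow> hom X Y \<in> Obj V"
  using fun_obj[OF homfun, of "(X,Y)"] by (simp add: prodcat_def opcat_def)
lemma homm_arr[simp]: "f \<in> Arr A \<Longrightarrow> g \<in> Arr A \<Longrightarrow> homm f g \<in> Arr V"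
  "f \<in> Arr A \<Longrightarrow> g \<in> Arr A \<Longrightarrow> Dom V (homm f g) = hom (Cod A f) (Dom A g)"
  "f \<in> Arr A \<Longrightarrow> g \<in> Arr A \<Longrightarrow> Cod V (homm f g) = hom (Dom A f) (Cod A g)"
  using fun_arr[OF homfun, of "(f,g)"] by (simp_all add: prodcat_def opcat_def)
lemma homm_idt[simp]: "X \<in> Obj A \<Longrightarrow> Y \<in> Obj A \<Longrightarrow> homm (iA X) (iA Y) = iV (hom X Y)"
  using fun_idt[OF homfun, of "(X,Y)"] by (simp add: prodcat_def opcat_def)
lemma homm_cmp: "f1 \<in> Arr A \<Longrightarrow> f2 \<in> Arr A \<Longrightarrow> g1 \<in> Arr A \<Longrightarrow> g2 \<in> Arr A \<Longrightarrow> Dom A f1 = Cod A f2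
  \<Longrightarrow> Cod A g1 = Dom A g2 \<Longrightarrow> homm (Cmp A f1 f2) (Cmp A g2 g1) = homm f2 g2 \<cdot> homm f1 g1"
  using fun_cmp[OF homfun, of "(f1,g1)" "(f2,g2)"] by (simp add: prodcat_def opcat_def)


lemma unt_obj[simp]: "unt T \<in> Obj V" using SM unfolding skew_monoidal_def by blast
lemma asc_arr[simp]: "X \<in> Obj V \<Longrightarrow> Y \<in> Obj V \<Longrightarrow> Z \<in> Obj V \<Longrightarrow> asc T X Y Z \<in> Arr V"
  "X \<in> Obj V \<Longrightarrow> Y \<in> Obj V \<Longrightarrow> Z \<in> Obj V \<Longrightarrow> Dom V (asc T X Y Z) = ten T (ten T X Y) Z"
  "X \<in> Obj V \<Longrightarrow> Y \<in> Obj V \<Longrightarrow> Z \<in> Obj V \<Longrightarrow> Cod V (asc T X Y Z) = ten T X (ten T Y Z)"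
  using SM unfolding skew_monoidal_def hom_in_def by blast+
lemma lu_arr[simp]: "X \<in> Obj V \<Longrightarrow> lu T X \<in> Arr V" "X \<in> Obj V \<Longrightarrow> Dom V (lu T X) = ten T (unt T) X"
  "X \<in> Obj V \<Longrightarrow> Cod V (lu T X) = X"
  using SM unfolding skew_monoidal_def hom_in_def by blast+
lemma ru_arr[simp]: "X \<in> Obj V \<Longrightarrow> ru T X \<in> Arr V" "X \<in> Obj V \<Longrightarrow> Cod V (ru T X) = ten T X (unt T)"
  "X \<in> Obj V \<Longrightarrow> Dom V (ru T X) = X"
  using SM unfolding skew_monoidal_def hom_in_def by blast+
lemma lu_nat: "f \<in> Arr V \<Longrightarrow> Dom V f = X \<Longrightarrow> Cod V f = Y \<Longrightarrow> lu T Y \<cdot> (iV (unt T) \<odot> f) = f \<cdot> lu T X"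
  using SM unfolding skew_monoidal_def by blast
lemma asc_nat: "f \<in> Arr V \<Longrightarrow> g \<in> Arr V \<Longrightarrow> h \<in> Arr V \<Longrightarrow> Dom V f = X \<Longrightarrow> Dom V g = Y \<Longrightarrow> Dom V h = Z
  \<Longrightarrow> asc T (Cod V f) (Cod V g) (Cod V h) \<cdot> ((f \<odot> g) \<odot> h) = (f \<odot> (g \<odot> h)) \<cdot> asc T X Y Z"
  using SM unfolding skew_monoidal_def by blast

lemma phi_arr[simp]: "X \<in> Obj V \<Longrightarrow> Y \<in> Obj V \<Longrightarrow> phi X Y \<in> Arr V"
  "X \<in> Obj V \<Longrightarrow> Y \<in> Obj V \<Longrightarrow> Dom V (phi X Y) = ten T (Qo X) (Qo Y)"
  "X \<in> Obj V \<Longrightarrow> Y \<in> Obj V \<Longrightarrow> Cod V (phi X Y) = Qo (ten T X Y)"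
  using MC unfolding monoidal_comonad_def hom_in_def by blast+
lemma phi0_arr[simp]: "phi0 \<in> Arr V" "Dom V phi0 = unt T" "Cod V phi0 = Qo (unt T)"
  using MC unfolding monoidal_comonad_def hom_in_def by blast+
lemma phi_nat: "f \<in> Arr V \<Longrightarrow> g \<in> Arr V \<Longrightarrow> Dom V f = X \<Longrightarrow> Dom V g = Y \<Longrightarrow>
   phi (Cod V f) (Cod V g) \<cdot> (Qm f \<odot> Qm g) = Qm (f \<odot> g) \<cdot> phi X Y"
  using MC unfolding monoidal_comonad_def by blast
lemma dQ_arr[simp]: "X \<in> Obj V \<Longrightarrow> dQ X \<in> Arr V" "X \<in> Obj V \<Longrightarrow> Dom V (dQ X) = Qo X"
  "X \<in> Obj V \<Longrightarrow> Cod V (dQ X) = Qo (Qo X)"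
  using QC unfolding comonad_def nat_trans_def hom_in_def by auto
lemma eQ_arr[simp]: "X \<in> Obj V \<Longrightarrow> eQ X \<in> Arr V" "X \<in> Obj V \<Longrightarrow> Dom V (eQ X) = Qo X"
  "X \<in> Obj V \<Longrightarrow> Cod V (eQ X) = X"
  using QC unfolding comonad_def nat_trans_def hom_in_def by auto
lemma dS_arr[simp]: "X \<in> Obj A \<Longrightarrow> dS X \<in> Arr A" "X \<in> Obj A \<Longrightarrow> Dom A (dS X) = So X"
  "X \<in> Obj A \<Longrightarrow> Cod A (dS X) = So (So X)"
  using SC unfolding comonad_def nat_trans_def hom_in_def by auto
lemma eS_arr[simp]: "X \<in> Obj A \<Longrightarrow> eS X \<in> Arr A" "X \<in> Obj A \<Longrightarrow> Dom A (eS X) = So X"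
  "X \<in> Obj A \<Longrightarrow> Cod A (eS X) = X"
  using SC unfolding comonad_def nat_trans_def hom_in_def by auto
lemma dS_nat: "f \<in> Arr A \<Longrightarrow> Dom A f = X \<Longrightarrow> Cod A f = Y \<Longrightarrow> Cmp A (dS Y) (Sm f) = Cmp A (Sm (Sm f)) (dS X)"
  using SC unfolding comonad_def nat_trans_def by auto
lemma eS_nat: "f \<in> Arr A \<Longrightarrow> Dom A f = X \<Longrightarrow> Cod A f = Y \<Longrightarrow> Cmp A (eS Y) (Sm f) = Cmp A f (eS X)"
  using SC unfolding comonad_def nat_trans_def by auto
lemma dS_coassoc: "X \<in> Obj A \<Longrightarrow> Cmp A (Sm (dS X)) (dS X) = Cmp A (dS (So X)) (dS X)"
  using SC unfolding comonad_def by blast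
lemma dS_counit1: "X \<in> Obj A \<Longrightarrow> Cmp A (eS (So X)) (dS X) = iA (So X)"
  using SC unfolding comonad_def by blast
lemma dS_counit2: "X \<in> Obj A \<Longrightarrow> Cmp A (Sm (eS X)) (dS X) = iA (So X)"
  using SC unfolding comonad_def by blast

lemma M_arr[simp]: "X \<in> Obj A \<Longrightarrow> Y \<in> Obj A \<Longrightarrow> Z \<in> Obj A \<Longrightarrow> M X Y Z \<in> Arr V"
  "X \<in> Obj A \<Longrightarrow> Y \<in> Obj A \<Longrightarrow> Z \<in> Obj A \<Longrightarrow> Dom V (M X Y Z) = ten T (hom Y Z) (hom X Y)"
  "X \<in> Obj A \<Longrightarrow> Y \<in> Obj A \<Longrightarrow> Z \<in> Obj A \<Longrightarrow> Cod V (M X Y Z) = hom X Z"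
proof -
  have "\<forall>X\<in>Obj A. \<forall>Y\<in>Obj A. \<forall>Z\<in>Obj A. hom_in V (M X Y Z) (ten T (hom Y Z) (hom X Y)) (hom X Z)"
    using SE unfolding skew_enriched_def by (elim conjE) assumption
  then show "X \<in> Obj A \<Longrightarrow> Y \<in> Obj A \<Longrightarrow> Z \<in> Obj A \<Longrightarrow> M X Y Z \<in> Arr V"
  "X \<in> Obj A \<Longrightarrow> Y \<in> Obj A \<Longrightarrow> Z \<in> Obj A \<Longrightarrow> Dom V (M X Y Z) = ten T (hom Y Z) (hom X Y)"
  "X \<in> Obj A \<Longrightarrow> Y \<in> Obj A \<Longrightarrow> Z \<in> Obj A \<Longrightarrow> Cod V (M X Y Z) = hom X Z"
    unfolding hom_in_def by blast+
qed
lemma j_arr[simp]: "X \<in> Obj A \<Longrightarrow> j X \<in> Arr V" "X \<in> Obj A \<Longrightarrow> Dom V (j X) = unt T"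
  "X \<in> Obj A \<Longrightarrow> Cod V (j X) = hom X X"
  using SE unfolding skew_enriched_def hom_in_def by blast+
lemma psi_arr[simp]: "X \<in> Obj A \<Longrightarrow> Y \<in> Obj A \<Longrightarrow> psi X Y \<in> Arr V"
  "X \<in> Obj A \<Longrightarrow> Y \<in> Obj A \<Longrightarrow> Dom V (psi X Y) = Qo (hom X Y)"
  "X \<in> Obj A \<Longrightarrow> Y \<in> Obj A \<Longrightarrow> Cod V (psi X Y) = hom (So X) (So Y)"
  using LWC unfolding locally_weak_comonad_def hom_in_def by blast+

lemma M_natX: "f \<in> Arr A \<Longrightarrow> Dom A f = X \<Longrightarrow> Cod A f = X' \<Longrightarrow> Y \<in> Obj A \<Longrightarrow> Z \<in> Obj A \<Longrightarrow>
  homm f (iA Z) \<cdot> M X' Y Z = M X Y Z \<cdot> (iV (hom Y Z) \<odot> homm f (iA Y))"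
  using SE unfolding skew_enriched_def by blast
lemma M_natZ: "g \<in> Arr A \<Longrightarrow> Dom A g = Z \<Longrightarrow> Cod A g = Z' \<Longrightarrow> X \<in> Obj A \<Longrightarrow> Y \<in> Obj A \<Longrightarrow>
  homm (iA X) g \<cdot> M X Y Z = M X Y Z' \<cdot> (homm (iA Y) g \<odot> iV (hom X Y))"
  using SE unfolding skew_enriched_def by blast
lemma M_natY: "h \<in> Arr A \<Longrightarrow> Dom A h = Y \<Longrightarrow> Cod A h = Y' \<Longrightarrow> X \<in> Obj A \<Longrightarrow> Z \<in> Obj A \<Longrightarrow>
  M X Y' Z \<cdot> (iV (hom Y' Z) \<odot> homm (iA X) h) = M X Y Z \<cdot> (homm h (iA Z) \<odot> iV (hom X Y))"
  using SE unfolding skew_enriched_def by blast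
lemma j_nat: "f \<in> Arr A \<Longrightarrow> Dom A f = X \<Longrightarrow> Cod A f = Y \<Longrightarrow>
  homm (iA X) f \<cdot> j X = homm f (iA Y) \<cdot> j Y"
  using SE unfolding skew_enriched_def by blast
lemma M_assoc: "W \<in> Obj A \<Longrightarrow> X \<in> Obj A \<Longrightarrow> Y \<in> Obj A \<Longrightarrow> Z \<in> Obj A \<Longrightarrow>
  M W Y Z \<cdot> (iV (hom Y Z) \<odot> M W X Y) \<cdot> asc T (hom Y Z) (hom X Y) (hom W X) = M W X Z \<cdot> (M X Y Z \<odot> iV (hom W X))"
  using SE unfolding skew_enriched_def by blast
lemma M_lu: "X \<in> Obj A \<Longrightarrow> Y \<in> Obj A \<Longrightarrow> M X Y Y \<cdot> (j Y \<odot> iV (hom X Y)) = lu T (hom X Y)"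
  using SE unfolding skew_enriched_def by blast
lemma M_ru: "X \<in> Obj A \<Longrightarrow> Y \<in> Obj A \<Longrightarrow> M X X Y \<cdot> (iV (hom X Y) \<odot> j X) \<cdot> ru T (hom X Y) = iV (hom X Y)"
  using SE unfolding skew_enriched_def by blast

lemma psi_nat: "f \<in> Arr A \<Longrightarrow> g \<in> Arr A \<Longrightarrow> Dom A f = X \<Longrightarrow> Cod A g = Y' \<Longrightarrow> Cod A f = X' \<Longrightarrow> Dom A g = Y \<Longrightarrow>
  psi X Y' \<cdot> Qm (homm f g) = homm (Sm f) (Sm g) \<cdot> psi X' Y"
  using LWC unfolding locally_weak_comonad_def by blast
lemma psi_M: "X \<in> Obj A \<Longrightarrow> Y \<in> Obj A \<Longrightarrow> Z \<in> Obj A \<Longrightarrow>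
  psi X Z \<cdot> Qm (M X Y Z) \<cdot> phi (hom Y Z) (hom X Y) = M (So X) (So Y) (So Z) \<cdot> (psi Y Z \<odot> psi X Y)"
  using LWC unfolding locally_weak_comonad_def by blast
lemma psi_d: "X \<in> Obj A \<Longrightarrow> Y \<in> Obj A \<Longrightarrow>
  homm (dS X) (iA (So (So Y))) \<cdot> psi (So X) (So Y) \<cdot> Qm (psi X Y) \<cdot> dQ (hom X Y) = homm (iA (So X)) (dS Y) \<cdot> psi X Y"
  using LWC unfolding locally_weak_comonad_def by blast
lemma psi_j: "X \<in> Obj A \<Longrightarrow> psi X X \<cdot> Qm (j X) \<cdot> phi0 = j (So X)"
  using LWC unfolding locally_weak_comonad_def by blast
lemma psi_e: "X \<in> Obj A \<Longrightarrow> Y \<in> Obj A \<Longrightarrow>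
  homm (iA (So X)) (eS Y) \<cdot> psi X Y = homm (eS X) (iA Y) \<cdot> eQ (hom X Y)"
  using LWC unfolding locally_weak_comonad_def by blast

lemma Qm_cmp: "f \<in> Arr V \<Longrightarrow> g \<in> Arr V \<Longrightarrow> Cod V f = Dom V g \<Longrightarrow> Qm (g \<cdot> f) = Qm g \<cdot> Qm f"
  by (rule fun_cmp[OF Qfun])
lemma Sm_cmp: "f \<in> Arr A \<Longrightarrow> g \<in> Arr A \<Longrightarrow> Cod A f = Dom A g \<Longrightarrow> Sm (Cmp A g f) = Cmp A (Sm g) (Sm f)"
  by (rule fun_cmp[OF Sfun])
lemma eQ_phi: "X \<in> Obj V \<Longrightarrow> Y \<in> Obj V \<Longrightarrow> eQ (ten T X Y) \<cdot> phi X Y = eQ X \<odot> eQ Y"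
  using MC unfolding monoidal_comonad_def by blast

end


context LW begin

definition M' where "M' X Y Z = homm (dS X) (iA Z) \<cdot> M (So (So X)) (So Y) Z \<cdot> (iV (hom (So Y) Z) \<odot> psi (So X) Y)"
definition j' where "j' X = homm (eS X) (iA X) \<cdot> j X"

lemma M'_arr[simp]: "X \<in> Obj A \<Longrightarrow> Y \<in> Obj A \<Longrightarrow> Z \<in> Obj A \<Longrightarrow> M' X Y Z \<in> Arr V"
  "X \<in> Obj A \<Longrightarrow> Y \<in> Obj A \<Longrightarrow> Z \<in> Obj A \<Longrightarrow> Dom V (M' X Y Z) = ten T (hom (So Y) Z) (Qo (hom (So X) Y))"
  "X \<in> Obj A \<Longrightarrow> Y \<in> Obj A \<Longrightarrow> Z \<in> Obj A \<Longrightarrow> Cod V (M' X Y Z) = hom (So X) Z"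
  unfolding M'_def by simp_all
lemma j'_arr[simp]: "X \<in> Obj A \<Longrightarrow> j' X \<in> Arr V" "X \<in> Obj A \<Longrightarrow> Dom V (j' X) = unt T"
  "X \<in> Obj A \<Longrightarrow> Cod V (j' X) = hom (So X) X"
  unfolding j'_def by simp_all

lemmas restV = cat_rest[OF catV]

lemma tm_split_r: "X \<in> Obj V \<Longrightarrow> a \<in> Arr V \<Longrightarrow> b \<in> Arr V \<Longrightarrow> Cod V b = Dom V a \<Longrightarrow>
  iV X \<odot> (a \<cdot> b) = (iV X \<odot> a) \<cdot> (iV X \<odot> b)"
  using tenm_cmp[of "iV X" "iV X" b a] by simp
lemma tm_split_l: "X \<in> Obj V \<Longrightarrow> a \<in> Arr V \<Longrightarrow> b \<in> Arr V \<Longrightarrow> Cod V b = Dom V a \<Longrightarrow>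
  (a \<cdot> b) \<odot> iV X = (a \<odot> iV X) \<cdot> (b \<odot> iV X)"
  using tenm_cmp[of b a "iV X" "iV X"] by simp
lemma tm_xch1: "a \<in> Arr V \<Longrightarrow> b \<in> Arr V \<Longrightarrow> a \<odot> b = (a \<odot> iV (Cod V b)) \<cdot> (iV (Dom V a) \<odot> b)"
  using tenm_cmp[of "iV (Dom V a)" a b "iV (Cod V b)"] by simp
lemma tm_xch2: "a \<in> Arr V \<Longrightarrow> b \<in> Arr V \<Longrightarrow> a \<odot> b = (iV (Cod V a) \<odot> b) \<cdot> (a \<odot> iV (Dom V b))"
  using tenm_cmp[of a "iV (Cod V a)" "iV (Dom V b)" b] by simp
lemma hm_split1: "a \<in> Arr A \<Longrightarrow> b \<in> Arr A \<Longrightarrow> Cod A b = Dom A a \<Longrightarrow> Z \<in> Obj A \<Longrightarrow>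
  homm (Cmp A a b) (iA Z) = homm b (iA Z) \<cdot> homm a (iA Z)"
  using homm_cmp[of a b "iA Z" "iA Z"] by simp
lemma hm_split2: "a \<in> Arr A \<Longrightarrow> b \<in> Arr A \<Longrightarrow> Cod A b = Dom A a \<Longrightarrow> Z \<in> Obj A \<Longrightarrow>
  homm (iA Z) (Cmp A a b) = homm (iA Z) a \<cdot> homm (iA Z) b"
  using homm_cmp[of "iA Z" "iA Z" b a] by simp
lemma hm_xch1: "f \<in> Arr A \<Longrightarrow> g \<in> Arr A \<Longrightarrow> homm f g = homm f (iA (Cod A g)) \<cdot> homm (iA (Cod A f)) g"
  using homm_cmp[of "iA (Cod A f)" f g "iA (Cod A g)"] by simp
lemma hm_xch2: "f \<in> Arr A \<Longrightarrow> g \<in> Arr A \<Longrightarrow> homm f g = homm (iA (Dom A f)) g \<cdot> homm f (iA (Dom A g))"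
  using homm_cmp[of f "iA (Dom A f)" "iA (Dom A g)" g] by simp

lemma natX: assumes f: "f \<in> Arr A" and Y: "Y \<in> Obj A" and Z: "Z \<in> Obj A"
  shows "homm (Sm f) (iA Z) \<cdot> M' (Cod A f) Y Z = M' (Dom A f) Y Z \<cdot> (iV (hom (So Y) Z) \<odot> Qm (homm (Sm f) (iA Y)))"
proof -
  define X where "X = Dom A f"
  define X' where "X' = Cod A f"
  have X: "X \<in> Obj A" "X' \<in> Obj A" "Dom A f = X" "Cod A f = X'" using f X_def X'_def by auto
  have e1: "homm (Sm f) (iA Z) \<cdot> homm (dS X') (iA Z) = homm (dS X) (iA Z) \<cdot> homm (Sm (Sm f)) (iA Z)"
    using f X Z by (simp add: hm_split1[symmetric] dS_nat)
  have e2: "homm (Sm (Sm f)) (iA Z) \<cdot> M (So (So X')) (So Y) Z = M (So (So X)) (So Y) Z \<cdot> (iV (hom (So Y) Z) \<odot> homm (Sm (Sm f)) (iA (So Y)))"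
    by (rule M_natX) (use f X Y Z  in auto)
  have e3: "psi (So X) Y \<cdot> Qm (homm (Sm f) (iA Y)) = homm (Sm (Sm f)) (iA (So Y)) \<cdot> psi (So X') Y"
    using psi_nat[of "Sm f" "iA Y" "So X" Y "So X'" Y] f X Y  by simp
  have e3': "(iV (hom (So Y) Z) \<odot> homm (Sm (Sm f)) (iA (So Y))) \<cdot> (iV (hom (So Y) Z) \<odot> psi (So X') Y)
     = (iV (hom (So Y) Z) \<odot> psi (So X) Y) \<cdot> (iV (hom (So Y) Z) \<odot> Qm (homm (Sm f) (iA Y)))"
    using f X Y Z  by (simp add: tm_split_r[symmetric] e3)
  show ?thesis unfolding M'_def X_def[symmetric] X'_def[symmetric]
    using f X Y Z 
    by (simp add: restV[OF e1] restV[OF e2] e3')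
qed


lemma rest21: assumes "Cmp V a b = d" "a \<in> Arr V" "b \<in> Arr V" "r \<in> Arr V"
  "Cod V b = Dom V a" "Cod V r = Dom V b" shows "a \<cdot> (b \<cdot> r) = d \<cdot> r"
proof -
  have "(a \<cdot> b) \<cdot> r = a \<cdot> (b \<cdot> r)" using assms(2-) by simp
  then show ?thesis using assms(1) by simp
qed
lemma rest31: assumes "a \<cdot> b \<cdot> c = d" "a \<in> Arr V" "b \<in> Arr V" "c \<in> Arr V" "r \<in> Arr V"
  "Cod V b = Dom V a" "Cod V c = Dom V b" "Cod V r = Dom V c" shows "a \<cdot> (b \<cdot> (c \<cdot> r)) = d \<cdot> r"
proof -
  have "(a \<cdot> b \<cdot> c) \<cdot> r = a \<cdot> (b \<cdot> (c \<cdot> r))" using assms(2-) by simp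
  then show ?thesis using assms(1) by simp
qed
lemma rest32: assumes "a \<cdot> b \<cdot> c = d \<cdot> e" "a \<in> Arr V" "b \<in> Arr V" "c \<in> Arr V" "d \<in> Arr V" "e \<in> Arr V" "r \<in> Arr V"
  "Cod V b = Dom V a" "Cod V c = Dom V b" "Cod V e = Dom V d" "Cod V r = Dom V c" "Cod V r = Dom V e"
  shows "a \<cdot> (b \<cdot> (c \<cdot> r)) = d \<cdot> (e \<cdot> r)"
proof -
  have "(a \<cdot> b \<cdot> c) \<cdot> r = a \<cdot> (b \<cdot> (c \<cdot> r))" using assms(2-) by simp
  moreover have "(d \<cdot> e) \<cdot> r = d \<cdot> (e \<cdot> r)" using assms(2-) by simp
  ultimately show ?thesis using assms(1) by simp
qed

lemma tm_comm: "a \<in> Arr V \<Longrightarrow> b \<in> Arr V \<Longrightarrow> Dom V a = A0 \<Longrightarrow> Cod V b = B1 \<Longrightarrow>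
  (a \<odot> iV B1) \<cdot> (iV A0 \<odot> b) = (iV (Cod V a) \<odot> b) \<cdot> (a \<odot> iV (Dom V b))"
  using tm_xch1[of a b] tm_xch2[of a b] by simp
lemma tm_comm': "a \<in> Arr V \<Longrightarrow> b \<in> Arr V \<Longrightarrow> Cod V a = A1 \<Longrightarrow> Dom V b = B0 \<Longrightarrow>
  (iV A1 \<odot> b) \<cdot> (a \<odot> iV B0) = (a \<odot> iV (Cod V b)) \<cdot> (iV (Dom V a) \<odot> b)"
  using tm_xch1[of a b] tm_xch2[of a b] by simp
lemma hm_comm: "f \<in> Arr A \<Longrightarrow> g \<in> Arr A \<Longrightarrow> Dom A f = X \<Longrightarrow> Dom A g = Y \<Longrightarrow>
  homm (iA X) g \<cdot> homm f (iA Y) = homm f (iA (Cod A g)) \<cdot> homm (iA (Cod A f)) g"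
  using hm_xch1[of f g] hm_xch2[of f g] by simp

end


context LW begin
lemma natZ: assumes g: "g \<in> Arr A" and X: "X \<in> Obj A" and Y: "Y \<in> Obj A"
  shows "homm (Sm (iA X)) g \<cdot> M' X Y (Dom A g) = M' X Y (Cod A g) \<cdot> (homm (Sm (iA Y)) g \<odot> Qm (iV (hom (So X) Y)))"
proof -
  define Z where "Z = Dom A g"
  define Z' where "Z' = Cod A g"
  have Z: "Z \<in> Obj A" "Z' \<in> Obj A" "Dom A g = Z" "Cod A g = Z'" using g Z_def Z'_def by auto
  have e1: "homm (iA (So X)) g \<cdot> homm (dS X) (iA Z) = homm (dS X) (iA Z') \<cdot> homm (iA (So (So X))) g"
    using g X Z by (simp add: hm_comm)
  have e2: "homm (iA (So (So X))) g \<cdot> M (So (So X)) (So Y) Z = M (So (So X)) (So Y) Z' \<cdot> (homm (iA (So Y)) g \<odot> iV (hom (So (So X)) (So Y)))"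
    by (rule M_natZ) (use g X Y Z in auto)
  show ?thesis unfolding M'_def Z_def[symmetric] Z'_def[symmetric]
    using g X Y Z
    by (simp add: restV[OF e1] restV[OF e2] tm_comm)
qed

lemma natY: assumes h: "h \<in> Arr A" and X: "X \<in> Obj A" and Z: "Z \<in> Obj A"
  shows "M' X (Cod A h) Z \<cdot> (iV (hom (So (Cod A h)) Z) \<odot> Qm (homm (Sm (iA X)) h))
       = M' X (Dom A h) Z \<cdot> (homm (Sm h) (iA Z) \<odot> Qm (iV (hom (So X) (Dom A h))))"
proof -
  define Y where "Y = Dom A h"
  define Y' where "Y' = Cod A h"
  have Y: "Y \<in> Obj A" "Y' \<in> Obj A" "Dom A h = Y" "Cod A h = Y'" using h Y_def Y'_def by auto
  have e1: "psi (So X) Y' \<cdot> Qm (homm (iA (So X)) h) = homm (iA (So (So X))) (Sm h) \<cdot> psi (So X) Y"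
    using psi_nat[of "iA (So X)" h "So X" Y' "So X" Y] h X Y by simp
  have e1': "(iV (hom (So Y') Z) \<odot> psi (So X) Y') \<cdot> (iV (hom (So Y') Z) \<odot> Qm (homm (iA (So X)) h))
     = (iV (hom (So Y') Z) \<odot> homm (iA (So (So X))) (Sm h)) \<cdot> (iV (hom (So Y') Z) \<odot> psi (So X) Y)"
    using h X Y Z by (simp add: tm_split_r[symmetric] e1)
  have e2: "M (So (So X)) (So Y') Z \<cdot> (iV (hom (So Y') Z) \<odot> homm (iA (So (So X))) (Sm h))
     = M (So (So X)) (So Y) Z \<cdot> (homm (Sm h) (iA Z) \<odot> iV (hom (So (So X)) (So Y)))"
    using M_natY[of "Sm h" "So Y" "So Y'" "So (So X)" Z] h X Y Z by simp
  show ?thesis unfolding M'_def Y_def[symmetric] Y'_def[symmetric]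
    using h X Y Z
    by (simp add: e1' restV[OF e2] tm_comm)
qed

lemma jnat: assumes f: "f \<in> Arr A"
  shows "homm (Sm (iA (Dom A f))) f \<cdot> j' (Dom A f) = homm (Sm f) (iA (Cod A f)) \<cdot> j' (Cod A f)"
proof -
  define X where "X = Dom A f"
  define Y where "Y = Cod A f"
  have X: "X \<in> Obj A" "Y \<in> Obj A" "Dom A f = X" "Cod A f = Y" using f X_def Y_def by auto
  have e1: "homm (iA (So X)) f \<cdot> homm (eS X) (iA X) = homm (eS X) (iA Y) \<cdot> homm (iA X) f"
    using f X by (simp add: hm_comm)
  have e2: "homm (iA X) f \<cdot> j X = homm f (iA Y) \<cdot> j Y" using j_nat f X by blast
  have e3: "homm (eS X) (iA Y) \<cdot> homm f (iA Y) = homm (Sm f) (iA Y) \<cdot> homm (eS Y) (iA Y)"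
    using f X by (simp add: hm_split1[symmetric] eS_nat)
  show ?thesis unfolding j'_def X_def[symmetric] Y_def[symmetric]
    using f X
    by (simp add: restV[OF e1] e2 restV[OF e3])
qed


lemma luq: assumes X: "X \<in> Obj A" and Y: "Y \<in> Obj A"
  shows "M' X Y Y \<cdot> (j' Y \<odot> Qm (iV (hom (So X) Y))) = eQ (hom (So X) Y) \<cdot> lu T (Qo (hom (So X) Y))"
proof -
  note XY = X Y
  have "M' X Y Y \<cdot> (j' Y \<odot> Qm (iV (hom (So X) Y))) =
     homm (dS X) (iA Y) \<cdot> M (So (So X)) (So Y) Y \<cdot> (iV (hom (So Y) Y) \<odot> psi (So X) Y) \<cdot> (homm (eS Y) (iA Y) \<odot> iV (Qo (hom (So X) Y))) \<cdot> (j Y \<odot> iV (Qo (hom (So X) Y)))"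
    unfolding M'_def j'_def using XY by (simp add: tm_split_l)
  also have "\<dots> = homm (dS X) (iA Y) \<cdot> M (So (So X)) (So Y) Y \<cdot> (homm (eS Y) (iA Y) \<odot> iV (hom (So (So X)) (So Y))) \<cdot> (iV (hom Y Y) \<odot> psi (So X) Y) \<cdot> (j Y \<odot> iV (Qo (hom (So X) Y)))"
    using XY by (simp add: restV[OF tm_comm'])
  also have "\<dots> = homm (dS X) (iA Y) \<cdot> M (So (So X)) Y Y \<cdot> (iV (hom Y Y) \<odot> homm (iA (So (So X))) (eS Y)) \<cdot> (iV (hom Y Y) \<odot> psi (So X) Y) \<cdot> (j Y \<odot> iV (Qo (hom (So X) Y)))"
  proof -
    have e: "M (So (So X)) (So Y) Y \<cdot> (homm (eS Y) (iA Y) \<odot> iV (hom (So (So X)) (So Y))) = M (So (So X)) Y Y \<cdot> (iV (hom Y Y) \<odot> homm (iA (So (So X))) (eS Y))"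
      using M_natY[of "eS Y" "So Y" Y "So (So X)" Y] XY by simp
    show ?thesis using XY by (simp add: restV[OF e])
  qed
  also have "\<dots> = homm (dS X) (iA Y) \<cdot> M (So (So X)) Y Y \<cdot> (j Y \<odot> iV (hom (So (So X)) Y)) \<cdot> (iV (unt T) \<odot> homm (iA (So (So X))) (eS Y)) \<cdot> (iV (unt T) \<odot> psi (So X) Y)"
    using XY by (simp add: restV[OF tm_comm'] tm_comm')
  also have "\<dots> = homm (dS X) (iA Y) \<cdot> lu T (hom (So (So X)) Y) \<cdot> (iV (unt T) \<odot> homm (iA (So (So X))) (eS Y)) \<cdot> (iV (unt T) \<odot> psi (So X) Y)"
    using XY by (simp add: rest21[OF M_lu])
  also have "\<dots> = homm (dS X) (iA Y) \<cdot> lu T (hom (So (So X)) Y) \<cdot> (iV (unt T) \<odot> homm (eS (So X)) (iA Y)) \<cdot> (iV (unt T) \<odot> eQ (hom (So X) Y))"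
    using XY by (simp add: tm_split_r[symmetric] psi_e)
  also have "\<dots> = homm (dS X) (iA Y) \<cdot> homm (eS (So X)) (iA Y) \<cdot> eQ (hom (So X) Y) \<cdot> lu T (Qo (hom (So X) Y))"
    using XY by (simp add: restV[OF lu_nat] lu_nat)
  also have "\<dots> = eQ (hom (So X) Y) \<cdot> lu T (Qo (hom (So X) Y))"
  proof -
    have e: "homm (dS X) (iA Y) \<cdot> homm (eS (So X)) (iA Y) = iV (hom (So X) Y)"
      using XY by (simp add: hm_split1[symmetric] dS_counit1)
    show ?thesis using XY by (simp add: rest21[OF e])
  qed
  finally show ?thesis .
qed

lemma ruq: assumes X: "X \<in> Obj A" and Y: "Y \<in> Obj A"
  shows "M' X X Y \<cdot> (iV (hom (So X) Y) \<odot> Qm (j' X)) \<cdot> (iV (hom (So X) Y) \<odot> phi0) \<cdot> ru T (hom (So X) Y) = iV (hom (So X) Y)"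
proof -
  note XY = X Y
  have "M' X X Y \<cdot> (iV (hom (So X) Y) \<odot> Qm (j' X)) \<cdot> (iV (hom (So X) Y) \<odot> phi0) \<cdot> ru T (hom (So X) Y) =
    homm (dS X) (iA Y) \<cdot> M (So (So X)) (So X) Y \<cdot> (iV (hom (So X) Y) \<odot> psi (So X) X) \<cdot> (iV (hom (So X) Y) \<odot> Qm (homm (eS X) (iA X)))
     \<cdot> (iV (hom (So X) Y) \<odot> Qm (j X)) \<cdot> (iV (hom (So X) Y) \<odot> phi0) \<cdot> ru T (hom (So X) Y)"
    unfolding M'_def j'_def using XY by (simp add: Qm_cmp tm_split_r)
  also have "\<dots> = homm (dS X) (iA Y) \<cdot> M (So (So X)) (So X) Y \<cdot> (iV (hom (So X) Y) \<odot> homm (Sm (eS X)) (iA (So X)))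
     \<cdot> (iV (hom (So X) Y) \<odot> psi X X) \<cdot> (iV (hom (So X) Y) \<odot> Qm (j X)) \<cdot> (iV (hom (So X) Y) \<odot> phi0) \<cdot> ru T (hom (So X) Y)"
  proof -
    have e: "psi (So X) X \<cdot> Qm (homm (eS X) (iA X)) = homm (Sm (eS X)) (iA (So X)) \<cdot> psi X X"
      using psi_nat[of "eS X" "iA X" "So X" X X X] XY by simp
    have e': "(iV (hom (So X) Y) \<odot> psi (So X) X) \<cdot> (iV (hom (So X) Y) \<odot> Qm (homm (eS X) (iA X)))
       = (iV (hom (So X) Y) \<odot> homm (Sm (eS X)) (iA (So X))) \<cdot> (iV (hom (So X) Y) \<odot> psi X X)"
      using XY by (simp add: tm_split_r[symmetric] e)
    show ?thesis using XY by (simp add: restV[OF e'])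
  qed
  also have "\<dots> = homm (dS X) (iA Y) \<cdot> M (So (So X)) (So X) Y \<cdot> (iV (hom (So X) Y) \<odot> homm (Sm (eS X)) (iA (So X)))
     \<cdot> (iV (hom (So X) Y) \<odot> j (So X)) \<cdot> ru T (hom (So X) Y)"
  proof -
    have e: "(iV (hom (So X) Y) \<odot> psi X X) \<cdot> (iV (hom (So X) Y) \<odot> Qm (j X)) \<cdot> (iV (hom (So X) Y) \<odot> phi0) = iV (hom (So X) Y) \<odot> j (So X)"
      using XY by (simp add: tm_split_r[symmetric] psi_j)
    show ?thesis using XY by (simp add: rest31[OF e])
  qed
  also have "\<dots> = homm (dS X) (iA Y) \<cdot> homm (Sm (eS X)) (iA Y) \<cdot> M (So X) (So X) Y
     \<cdot> (iV (hom (So X) Y) \<odot> j (So X)) \<cdot> ru T (hom (So X) Y)"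
  proof -
    have e: "homm (Sm (eS X)) (iA Y) \<cdot> M (So X) (So X) Y = M (So (So X)) (So X) Y \<cdot> (iV (hom (So X) Y) \<odot> homm (Sm (eS X)) (iA (So X)))"
      using M_natX[of "Sm (eS X)" "So (So X)" "So X" "So X" Y] XY by simp
    show ?thesis using XY by (simp add: restV[OF e[symmetric]])
  qed
  also have "\<dots> = homm (dS X) (iA Y) \<cdot> homm (Sm (eS X)) (iA Y)"
    using XY by (simp add: M_ru)
  also have "\<dots> = iV (hom (So X) Y)"
    using XY by (simp add: hm_split1[symmetric] dS_counit2)
  finally show ?thesis .
qed

end


context LW begin

lemmas tm_merge_rest = rest21[OF tm_split_r[symmetric]]

lemma inner: assumes O: "W \<in> Obj A" "X \<in> Obj A" "Y \<in> Obj A"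
  shows "psi (So W) Y \<cdot> Qm (homm (dS W) (iA Y)) \<cdot> Qm (M (So (So W)) (So X) Y) \<cdot> Qm (iV (hom (So X) Y) \<odot> psi (So W) X)
      \<cdot> phi (hom (So X) Y) (Qo (hom (So W) X)) \<cdot> (iV (Qo (hom (So X) Y)) \<odot> dQ (hom (So W) X))
   = homm (Sm (dS W)) (iA (So Y)) \<cdot> M (So (So (So W))) (So (So X)) (So Y)
      \<cdot> (psi (So X) Y \<odot> (psi (So (So W)) (So X) \<cdot> Qm (psi (So W) X) \<cdot> dQ (hom (So W) X)))"
proof -
  have i1: "psi (So W) Y \<cdot> Qm (homm (dS W) (iA Y)) = homm (Sm (dS W)) (iA (So Y)) \<cdot> psi (So (So W)) Y"
    using psi_nat[of "dS W" "iA Y" "So W" Y "So (So W)" Y] O by simp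
  have i2: "Qm (iV (hom (So X) Y) \<odot> psi (So W) X) \<cdot> phi (hom (So X) Y) (Qo (hom (So W) X))
     = phi (hom (So X) Y) (hom (So (So W)) (So X)) \<cdot> (iV (Qo (hom (So X) Y)) \<odot> Qm (psi (So W) X))"
    using phi_nat[of "iV (hom (So X) Y)" "psi (So W) X" "hom (So X) Y" "Qo (hom (So W) X)"] O by simp
  have i3: "psi (So (So W)) Y \<cdot> Qm (M (So (So W)) (So X) Y) \<cdot> phi (hom (So X) Y) (hom (So (So W)) (So X))
     = M (So (So (So W))) (So (So X)) (So Y) \<cdot> (psi (So X) Y \<odot> psi (So (So W)) (So X))"
    using psi_M[of "So (So W)" "So X" Y] O by simp
  show ?thesis using O
    by (simp add: restV[OF i1] restV[OF i2] rest32[OF i3] tenm_cmp[symmetric])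
qed

lemma assocq: assumes O: "W \<in> Obj A" "X \<in> Obj A" "Y \<in> Obj A" "Z \<in> Obj A"
  shows "M' W Y Z \<cdot> (iV (hom (So Y) Z) \<odot> Qm (M' W X Y)) \<cdot>
     (iV (hom (So Y) Z) \<odot> phi (hom (So X) Y) (Qo (hom (So W) X))) \<cdot>
     (iV (hom (So Y) Z) \<odot> (iV (Qo (hom (So X) Y)) \<odot> dQ (hom (So W) X))) \<cdot>
     asc T (hom (So Y) Z) (Qo (hom (So X) Y)) (Qo (hom (So W) X))
   = M' W X Z \<cdot> (M' X Y Z \<odot> Qm (iV (hom (So W) X)))"
proof -
  let ?a = "hom (So Y) Z" and ?b = "hom (So X) Y" and ?c = "hom (So W) X"
  let ?R = "psi (So (So W)) (So X) \<cdot> Qm (psi (So W) X) \<cdot> dQ (hom (So W) X)"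
  have "M' W Y Z \<cdot> (iV ?a \<odot> Qm (M' W X Y)) \<cdot> (iV ?a \<odot> phi ?b (Qo ?c)) \<cdot> (iV ?a \<odot> (iV (Qo ?b) \<odot> dQ ?c)) \<cdot> asc T ?a (Qo ?b) (Qo ?c)
     = homm (dS W) (iA Z) \<cdot> M (So (So W)) (So Y) Z \<cdot> (iV ?a \<odot> (homm (Sm (dS W)) (iA (So Y)) \<cdot> M (So (So (So W))) (So (So X)) (So Y) \<cdot> (psi (So X) Y \<odot> ?R)))
       \<cdot> asc T ?a (Qo ?b) (Qo ?c)"
    unfolding M'_def using O by (simp add: Qm_cmp tm_merge_rest tm_split_r[symmetric] inner)
  also have "\<dots> = homm (dS W) (iA Z) \<cdot> M (So (So W)) (So Y) Z \<cdot> (iV ?a \<odot> homm (Sm (dS W)) (iA (So Y))) \<cdot> (iV ?a \<odot> M (So (So (So W))) (So (So X)) (So Y))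
      \<cdot> (iV ?a \<odot> (psi (So X) Y \<odot> ?R)) \<cdot> asc T ?a (Qo ?b) (Qo ?c)"
    using O by (simp add: tm_split_r)
  also have "\<dots> = homm (dS W) (iA Z) \<cdot> homm (dS (So W)) (iA Z) \<cdot> M (So (So (So W))) (So Y) Z \<cdot> (iV ?a \<odot> M (So (So (So W))) (So (So X)) (So Y))
      \<cdot> (iV ?a \<odot> (psi (So X) Y \<odot> ?R)) \<cdot> asc T ?a (Qo ?b) (Qo ?c)"
  proof -
    have e3: "M (So (So W)) (So Y) Z \<cdot> (iV ?a \<odot> homm (Sm (dS W)) (iA (So Y))) = homm (Sm (dS W)) (iA Z) \<cdot> M (So (So (So W))) (So Y) Z"
      using M_natX[of "Sm (dS W)" "So (So W)" "So (So (So W))" "So Y" Z] O by simp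
    have e4: "homm (dS W) (iA Z) \<cdot> homm (Sm (dS W)) (iA Z) = homm (dS W) (iA Z) \<cdot> homm (dS (So W)) (iA Z)"
      using O by (simp add: hm_split1[symmetric] dS_coassoc)
    show ?thesis using O by (simp add: restV[OF e3] restV[OF e4])
  qed
  also have "\<dots> = homm (dS W) (iA Z) \<cdot> homm (dS (So W)) (iA Z) \<cdot> M (So (So (So W))) (So (So X)) Z
      \<cdot> (M (So (So X)) (So Y) Z \<odot> iV (hom (So (So (So W))) (So (So X)))) \<cdot> ((iV ?a \<odot> psi (So X) Y) \<odot> ?R)"
  proof -
    have e5: "(iV ?a \<odot> (psi (So X) Y \<odot> ?R)) \<cdot> asc T ?a (Qo ?b) (Qo ?c)
       = asc T ?a (hom (So (So X)) (So Y)) (hom (So (So (So W))) (So (So X))) \<cdot> ((iV ?a \<odot> psi (So X) Y) \<odot> ?R)"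
      using asc_nat[of "iV ?a" "psi (So X) Y" ?R ?a "Qo ?b" "Qo ?c"] O by simp
    show ?thesis using O
      by (simp add: e5 rest32[OF M_assoc[of "So (So (So W))" "So (So X)" "So Y" Z]])
  qed
  also have "\<dots> = homm (dS W) (iA Z) \<cdot> M (So (So W)) (So (So X)) Z \<cdot> (iV (hom (So (So X)) Z) \<odot> homm (dS (So W)) (iA (So (So X))))
      \<cdot> (M (So (So X)) (So Y) Z \<odot> iV (hom (So (So (So W))) (So (So X)))) \<cdot> ((iV ?a \<odot> psi (So X) Y) \<odot> ?R)"
  proof -
    have e7: "homm (dS (So W)) (iA Z) \<cdot> M (So (So (So W))) (So (So X)) Z = M (So (So W)) (So (So X)) Z \<cdot> (iV (hom (So (So X)) Z) \<odot> homm (dS (So W)) (iA (So (So X))))"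
      using M_natX[of "dS (So W)" "So (So W)" "So (So (So W))" "So (So X)" Z] O by simp
    show ?thesis using O by (simp add: restV[OF e7])
  qed
  also have "\<dots> = homm (dS W) (iA Z) \<cdot> M (So (So W)) (So (So X)) Z
      \<cdot> ((M (So (So X)) (So Y) Z \<cdot> (iV ?a \<odot> psi (So X) Y)) \<odot> (homm (iA (So (So W))) (dS X) \<cdot> psi (So W) X))"
    using O by (simp add: tenm_cmp[symmetric] psi_d)
  also have "\<dots> = homm (dS W) (iA Z) \<cdot> M (So (So W)) (So (So X)) Z \<cdot> (iV (hom (So (So X)) Z) \<odot> homm (iA (So (So W))) (dS X))
      \<cdot> ((M (So (So X)) (So Y) Z \<cdot> (iV ?a \<odot> psi (So X) Y)) \<odot> psi (So W) X)"
    using O by (simp add: tenm_cmp[symmetric])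
  also have "\<dots> = homm (dS W) (iA Z) \<cdot> M (So (So W)) (So X) Z \<cdot> (homm (dS X) (iA Z) \<odot> iV (hom (So (So W)) (So X)))
      \<cdot> ((M (So (So X)) (So Y) Z \<cdot> (iV ?a \<odot> psi (So X) Y)) \<odot> psi (So W) X)"
  proof -
    have e10: "M (So (So W)) (So (So X)) Z \<cdot> (iV (hom (So (So X)) Z) \<odot> homm (iA (So (So W))) (dS X))
       = M (So (So W)) (So X) Z \<cdot> (homm (dS X) (iA Z) \<odot> iV (hom (So (So W)) (So X)))"
      using M_natY[of "dS X" "So X" "So (So X)" "So (So W)" Z] O by simp
    show ?thesis using O by (simp add: restV[OF e10])
  qed
  also have "\<dots> = M' W X Z \<cdot> (M' X Y Z \<odot> Qm (iV (hom (So W) X)))"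
    unfolding M'_def using O by (simp add: tenm_cmp[symmetric])
  finally show ?thesis .
qed

end


context LW begin

lemma c_functor: "functor (prodcat (opcat A) A) V (case_prod (\<lambda>X Y. hom (So X) Y)) (case_prod (\<lambda>f g. homm (Sm f) g))"
  unfolding functor_def prodcat_def opcat_def hom_in_def
  by (auto simp: homm_cmp Sm_cmp)

lemma main: "skew_enriched V (VQ V T Qo Qm phi phi0 dQ eQ) A (\<lambda>X Y. hom (So X) Y) (\<lambda>f g. homm (Sm f) g)
   (\<lambda>X Y Z. Cmp V (homm (dS X) (Idt A Z)) (Cmp V (M (So (So X)) (So Y) Z) (tenm T (Idt V (hom (So Y) Z)) (psi (So X) Y))))
   (\<lambda>X. Cmp V (homm (eS X) (Idt A X)) (j X))"
proof -
  have eqM: "(\<lambda>X Y Z. Cmp V (homm (dS X) (Idt A Z)) (Cmp V (M (So (So X)) (So Y) Z) (tenm T (Idt V (hom (So Y) Z)) (psi (So X) Y)))) = M'"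
    unfolding M'_def by (intro ext) (rule refl)
  have eqj: "(\<lambda>X. Cmp V (homm (eS X) (Idt A X)) (j X)) = j'"
    unfolding j'_def by (intro ext) (rule refl)
  show ?thesis unfolding eqM eqj skew_enriched_def VQ_def skew.simps
    apply (intro conjI ballI)
    apply (rule catA)
    apply (rule c_functor)
    apply (simp add: hom_in_def)
    apply (simp add: hom_in_def)
    apply (rule natX; assumption)
    apply (rule natZ; assumption)
    apply (rule natY; assumption)
    apply (rule jnat; assumption)
    apply (rule assocq; assumption)
    apply (rule luq; assumption)
    apply (rule ruq; assumption)
    done
qed

end

theorem mainTheorem4:
  fixes V :: "('v,'f) cat" and T :: "('v,'f) skew" and A :: "('a,'g) cat"
  assumes "skew_monoidal V T"
    and "skew_enriched V T A hom homm M j"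
    and "locally_weak_comonad V T A hom homm M j Qo Qm phi phi0 dQ eQ So Sm dS eS psi"
  shows "skew_enriched V (VQ V T Qo Qm phi phi0 dQ eQ) A
           (\<lambda>X Y. hom (So X) Y)
           (\<lambda>f g. homm (Sm f) g)
           (\<lambda>X Y Z. Cmp V (homm (dS X) (Idt A Z))
                      (Cmp V (M (So (So X)) (So Y) Z)
                         (tenm T (Idt V (hom (So Y) Z)) (psi (So X) Y))))
           (\<lambda>X. Cmp V (homm (eS X) (Idt A X)) (j X))"
proof -
  interpret LW V T A hom homm M j Qo Qm phi phi0 dQ eQ So Sm dS eS psi
    using assms by (rule LW.intro)
  show ?thesis by (rule main)
qed

end
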